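(* Let $D\subset\mathbb{R}^2$ be a closed disk containing the unit square $Q=[0,1]^2$ and let $f:D\to D$ be an $N$-to-1 local homeomorphism satisfying Assumptions 1 and 2 below. Let $S=\{1,\dots,N,1',\dots,N'\}$, $Z=\{a,b\}$ and $\tau:S\to Z$ with $\tau(i)=a$, $\tau(i')=b$. Then $f$ has an invariant Cantor set $\Lambda\subset\big(\bigcup_{s\in S}V^s\big)\cap(H_a\cup H_b)$ and there is a homeomorphism $\phi:\Lambda\to\Sigma_{Z,S}$ onto the zip shift space such that $\phi\circ f=\sigma_\tau\circ\phi$ on $\Lambda$, where $\sigma_\tau$ is the zip shift map.
   Context: Fix $0<\mu_h,\mu_v<1$. A horizontal curve is the graph of $h:[0,1]\to[0,1]$ with Lipschitz constant $\mu_h$; a vertical curve is the graph $\{(v(y),y)\}$ of $v:[0,1]\to[0,1]$ with Lipschitz constant $\mu_v$. A horizontal strip is $\{(x,y):x\in[0,1],\ h(x)\le y\le h'(x)\}$ for horizontal curves with $0\le h<h'\le1$; a vertical strip is $\{(x,y):y\in[0,1],\ v(y)\le x\le v'(y)\}$ for vertical curves with $0\le v<v'\le1$; widths are $d(H)=\max_x|h(x)-h'(x)|$, $d(V)=\max_y|v(y)-v'(y)|$. An $N$-to-1 local homeomorphism $f:D\to D$ is a map for which there are disjoint connected subsets $Q_1,\dots,Q_N$ of $D$ such that each restriction $f|_{Q_i}:Q_i\to f(Q_i)$ is a homeomorphism. Assumption 1: there are disjoint horizontal strips $H_a,H_b\subset Q$ and $2N$ disjoint vertical strips $V^i,V^{i'}\subset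 Q_i$ ($i=1,\dots,N$) such that $f$ maps each $V^i$ homeomorphically onto $H_a$ and each $V^{i'}$ homeomorphically onto $H_b$, with horizontal (resp. vertical) boundaries mapped to horizontal (resp. vertical) boundaries. Assumption 2: there are $0<\alpha_V,\alpha_H<1$ such that for every vertical strip $V$ contained in some $V^l$, $l\in S$, the set $f^{-1}(V)\cap V^l$ is a vertical strip with $d(f^{-1}(V)\cap V^l)<\alpha_V d(V)$, and for every horizontal strip $H$ contained in some $H_k$, $k\in Z$, the set $f(H)\cap H_k$ is a horizontal strip with $d(f(H)\cap H_k)\le\alpha_H d(H)$. The zip shift space $\Sigma_{Z,S}$ is the set of bi-infinite sequences $x=(x_i)_{i\in\mathbb{Z}}$ with $x_i\in S$ for $i\ge0$ and $x_i\in Z$ for $i<0$, with metric $d(x,y)=2^{-\min\{|i|:x_i\ne y_i\}}$; the zip shift map is $(\sigma_\tau x)_i=x_{i+1}$ for $i\ne-1$, $(\sigma_\tau x)_{-1}=\tau(x_0)$. *)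

theory Defs
  imports "HOL-Analysis.Analysis"
begin

text \<open>Alphabet: the symbols a, b of Z and the symbols i (SU i), i' (SP i) of S.\<close>
datatype letter = La | Lb | SU nat | SP nat

definition Zset :: "letter set" where "Zset = {La, Lb}"

definition Sset :: "nat \<Rightarrow> letter set" where "Sset N = SU ` {1..N} \<union> SP ` {1..N}"

fun tau :: "letter \<Rightarrow> letter" where
  "tau (SU i) = La"
| "tau (SP i) = Lb"
| "tau _ = La"

definition zip_space :: "nat \<Rightarrow> (int \<Rightarrow> letter) set" where
  "zip_space N = {x. (\<forall>i\<ge>0. x i \<in> Sset N) \<and> (\<forall>i<0. x i \<in> Zset)}"

definition zip_dist :: "(int \<Rightarrow> letter) \<Rightarrow> (int \<Rightarrow> letter) \<Rightarrow> real" where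
  "zip_dist x y = (if x = y then 0
      else 2 powr (- real (LEAST n. \<exists>i. nat \<bar>i\<bar> = n \<and> x i \<noteq> y i)))"

definition zip_shift :: "(int \<Rightarrow> letter) \<Rightarrow> int \<Rightarrow> letter" where
  "zip_shift x = (\<lambda>i. if i = -1 then tau (x 0) else x (i + 1))"

definition unit_sq :: "(real \<times> real) set" where "unit_sq = {0..1} \<times> {0..1}"

definition curve :: "real \<Rightarrow> (real \<Rightarrow> real) \<Rightarrow> bool" where
  "curve \<mu> h \<longleftrightarrow> h ` {0..1} \<subseteq> {0..1} \<and> \<mu>-lipschitz_on {0..1} h"

definition hset :: "(real \<Rightarrow> real) \<Rightarrow> (real \<Rightarrow> real) \<Rightarrow> (real \<times> real) set" where
  "hset h h' = {(x, y). x \<in> {0..1} \<and> h x \<le> y \<and> y \<le> h' x}"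

definition vset :: "(real \<Rightarrow> real) \<Rightarrow> (real \<Rightarrow> real) \<Rightarrow> (real \<times> real) set" where
  "vset v v' = {(x, y). y \<in> {0..1} \<and> v y \<le> x \<and> x \<le> v' y}"

definition hstrip_by :: "real \<Rightarrow> (real \<Rightarrow> real) \<Rightarrow> (real \<Rightarrow> real) \<Rightarrow> (real \<times> real) set \<Rightarrow> bool" where
  "hstrip_by \<mu> h h' H \<longleftrightarrow> curve \<mu> h \<and> curve \<mu> h' \<and> (\<forall>x\<in>{0..1}. h x < h' x) \<and> H = hset h h'"

definition vstrip_by :: "real \<Rightarrow> (real \<Rightarrow> real) \<Rightarrow> (real \<Rightarrow> real) \<Rightarrow> (real \<times> real) set \<Rightarrow> bool" where
  "vstrip_by \<mu> v v' V \<longleftrightarrow> curve \<mu> v \<and> curve \<mu> v' \<and> (\<forall>y\<in>{0..1}. v y < v' y) \<and> V = vset v v'"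

definition is_hstrip :: "real \<Rightarrow> (real \<times> real) set \<Rightarrow> bool" where
  "is_hstrip \<mu> H \<longleftrightarrow> (\<exists>h h'. hstrip_by \<mu> h h' H)"

definition is_vstrip :: "real \<Rightarrow> (real \<times> real) set \<Rightarrow> bool" where
  "is_vstrip \<mu> V \<longleftrightarrow> (\<exists>v v'. vstrip_by \<mu> v v' V)"

definition curve_gap :: "(real \<Rightarrow> real) \<Rightarrow> (real \<Rightarrow> real) \<Rightarrow> real" where
  "curve_gap h h' = (SUP t\<in>{0..1}. \<bar>h t - h' t\<bar>)"

text \<open>Widths d(H), d(V): the maximal distance of the bounding curves (these curves are
  uniquely determined on [0,1] by the strip).\<close>
definition hwidth :: "(real \<times> real) set \<Rightarrow> real" where
  "hwidth H = (THE w. \<exists>h h'. (\<forall>x\<in>{0..1}. h x < h' x) \<and> H = hset h h' \<and> w = curve_gap h h')"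

definition vwidth :: "(real \<times> real) set \<Rightarrow> real" where
  "vwidth V = (THE w. \<exists>v v'. (\<forall>y\<in>{0..1}. v y < v' y) \<and> V = vset v v' \<and> w = curve_gap v v')"

definition hstrip_hbd :: "(real \<Rightarrow> real) \<Rightarrow> (real \<Rightarrow> real) \<Rightarrow> (real \<times> real) set" where
  "hstrip_hbd h h' = {(x, h x) | x. x \<in> {0..1}} \<union> {(x, h' x) | x. x \<in> {0..1}}"

definition hstrip_vbd :: "(real \<Rightarrow> real) \<Rightarrow> (real \<Rightarrow> real) \<Rightarrow> (real \<times> real) set" where
  "hstrip_vbd h h' = {(x, y). x \<in> {0, 1} \<and> h x \<le> y \<and> y \<le> h' x}"

definition vstrip_hbd :: "(real \<Rightarrow> real) \<Rightarrow> (real \<Rightarrow> real) \<Rightarrow> (real \<times> real) set" where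
  "vstrip_hbd v v' = {(x, y). y \<in> {0, 1} \<and> v y \<le> x \<and> x \<le> v' y}"

definition vstrip_vbd :: "(real \<Rightarrow> real) \<Rightarrow> (real \<Rightarrow> real) \<Rightarrow> (real \<times> real) set" where
  "vstrip_vbd v v' = {(v y, y) | y. y \<in> {0..1}} \<union> {(v' y, y) | y. y \<in> {0..1}}"

definition cantor_set :: "(real \<times> real) set \<Rightarrow> bool" where
  "cantor_set K \<longleftrightarrow> K \<noteq> {} \<and> compact K \<and> (\<forall>x\<in>K. x islimpt K)
     \<and> (\<forall>C. C \<subseteq> K \<and> connected C \<longrightarrow> (\<forall>x\<in>C. \<forall>y\<in>C. x = y))"

end

theory Submission
  imports Defs
begin

lemma curve_cont: "curve \<mu> h \<Longrightarrow> continuous_on {0..1} h"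
  unfolding curve_def using lipschitz_on_continuous_on by blast

lemma curve_range: "curve \<mu> h \<Longrightarrow> t \<in> {0..1} \<Longrightarrow> 0 \<le> h t \<and> h t \<le> 1"
  unfolding curve_def by (auto simp: image_subset_iff)

lemma gap_upper:
  assumes "curve \<mu> h" "curve \<mu>' h'" "t \<in> {0..1}"
  shows "\<bar>h t - h' t\<bar> \<le> curve_gap h h'"
  unfolding curve_gap_def
proof (rule cSUP_upper[OF assms(3)])
  show "bdd_above ((\<lambda>t. \<bar>h t - h' t\<bar>) ` {0..1})"
  proof (rule bdd_aboveI2)
    fix t :: real assume t: "t \<in> {0..1}"
    have "0 \<le> h t \<and> h t \<le> 1" "0 \<le> h' t \<and> h' t \<le> 1"
      using curve_range[OF assms(1) t] curve_range[OF assms(2) t] by auto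
    then show "\<bar>h t - h' t\<bar> \<le> 1" by (simp add: abs_le_iff)
  qed
qed

lemma gap_le1:
  assumes "curve \<mu> h" "curve \<mu>' h'"
  shows "curve_gap h h' \<le> 1"
  unfolding curve_gap_def
proof (rule cSUP_least)
  fix t :: real assume t: "t \<in> {0..1}"
  have "0 \<le> h t \<and> h t \<le> 1" "0 \<le> h' t \<and> h' t \<le> 1"
    using curve_range[OF assms(1) t] curve_range[OF assms(2) t] by auto
  then show "\<bar>h t - h' t\<bar> \<le> 1" by (simp add: abs_le_iff)
qed simp

lemma vset_unique:
  assumes "\<forall>y\<in>{0..1}. v y < v' y" "\<forall>y\<in>{0..1}. u y < u' y" "vset v v' = vset u u'"
    "y \<in> {0..1}"
  shows "v y = u y \<and> v' y = u' y"
proof -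
  have a: "(v y, y) \<in> vset u u'" "(v' y, y) \<in> vset u u'"
    using assms by (auto simp: vset_def[of v v'] less_imp_le)
  have b: "(u y, y) \<in> vset v v'" "(u' y, y) \<in> vset v v'"
    using assms by (auto simp: vset_def[of u u'] less_imp_le)
  show ?thesis using a b by (auto simp: vset_def)
qed

lemma hset_unique:
  assumes "\<forall>y\<in>{0..1}. v y < v' y" "\<forall>y\<in>{0..1}. u y < u' y" "hset v v' = hset u u'"
    "y \<in> {0..1}"
  shows "v y = u y \<and> v' y = u' y"
proof -
  have a: "(y, v y) \<in> hset u u'" "(y, v' y) \<in> hset u u'"
    using assms by (auto simp: hset_def[of v v'] less_imp_le)
  have b: "(y, u y) \<in> hset v v'" "(y, u' y) \<in> hset v v'"
    using assms by (auto simp: hset_def[of u u'] less_imp_le)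
  show ?thesis using a b by (auto simp: hset_def)
qed

lemma vwidth_eq:
  assumes "vstrip_by \<mu> v v' W"
  shows "vwidth W = curve_gap v v'"
  unfolding vwidth_def
proof (rule the_equality)
  show "\<exists>va v'a. (\<forall>y\<in>{0..1}. va y < v'a y) \<and> W = vset va v'a \<and> curve_gap v v' = curve_gap va v'a"
    using assms unfolding vstrip_by_def by blast
next
  fix w assume "\<exists>va v'a. (\<forall>y\<in>{0..1}. va y < v'a y) \<and> W = vset va v'a \<and> w = curve_gap va v'a"
  then obtain u u' where u: "\<forall>y\<in>{0..1}. u y < u' y" "W = vset u u'" "w = curve_gap u u'" by blast
  have "\<And>y. y \<in> {0..1} \<Longrightarrow> u y = v y \<and> u' y = v' y"
    using vset_unique[OF u(1), of v v'] u assms unfolding vstrip_by_def by auto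
  then show "w = curve_gap v v'" unfolding u(3) curve_gap_def
    by (intro SUP_cong) auto
qed

lemma hwidth_eq:
  assumes "hstrip_by \<mu> v v' W"
  shows "hwidth W = curve_gap v v'"
  unfolding hwidth_def
proof (rule the_equality)
  show "\<exists>va v'a. (\<forall>y\<in>{0..1}. va y < v'a y) \<and> W = hset va v'a \<and> curve_gap v v' = curve_gap va v'a"
    using assms unfolding hstrip_by_def by blast
next
  fix w assume "\<exists>va v'a. (\<forall>y\<in>{0..1}. va y < v'a y) \<and> W = hset va v'a \<and> w = curve_gap va v'a"
  then obtain u u' where u: "\<forall>y\<in>{0..1}. u y < u' y" "W = hset u u'" "w = curve_gap u u'" by blast
  have "\<And>y. y \<in> {0..1} \<Longrightarrow> u y = v y \<and> u' y = v' y"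
    using hset_unique[OF u(1), of v v'] u assms unfolding hstrip_by_def by auto
  then show "w = curve_gap v v'" unfolding u(3) curve_gap_def
    by (intro SUP_cong) auto
qed

lemma vstrip_closed:
  assumes "vstrip_by \<mu> v v' W" shows "closed W"
proof -
  have cv: "continuous_on {0..1} v" "continuous_on {0..1} v'"
    using assms curve_cont unfolding vstrip_by_def by auto
  have S: "closed (UNIV \<times> {0..(1::real)})" by (intro closed_Times) auto
  have c1: "continuous_on (UNIV \<times> {0..1}) (\<lambda>p::real\<times>real. v (snd p))"
    by (rule continuous_on_compose2[OF cv(1)]) (auto intro!: continuous_intros)
  have c2: "continuous_on (UNIV \<times> {0..1}) (\<lambda>p::real\<times>real. v' (snd p))"
    by (rule continuous_on_compose2[OF cv(2)]) (auto intro!: continuous_intros)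
  have c3: "continuous_on (UNIV \<times> {0..1}) (\<lambda>p::real\<times>real. fst p)"
    by (auto intro!: continuous_intros)
  have "closed ({p \<in> UNIV \<times> {0..1}. v (snd p) \<le> fst p} \<inter> {p \<in> UNIV \<times> {0..1}. fst p \<le> v' (snd p)})"
    by (intro closed_Int continuous_on_closed_Collect_le c1 c2 c3 S)
  moreover have "W = {p \<in> UNIV \<times> {0..1}. v (snd p) \<le> fst p} \<inter> {p \<in> UNIV \<times> {0..1}. fst p \<le> v' (snd p)}"
    using assms unfolding vstrip_by_def vset_def by auto
  ultimately show ?thesis by simp
qed

lemma hstrip_closed:
  assumes "hstrip_by \<mu> v v' W" shows "closed W"
proof -
  have cv: "continuous_on {0..1} v" "continuous_on {0..1} v'"
    using assms curve_cont unfolding hstrip_by_def by auto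
  have S: "closed ({0..(1::real)} \<times> UNIV)" by (intro closed_Times) auto
  have c1: "continuous_on ({0..1} \<times> UNIV) (\<lambda>p::real\<times>real. v (fst p))"
    by (rule continuous_on_compose2[OF cv(1)]) (auto intro!: continuous_intros)
  have c2: "continuous_on ({0..1} \<times> UNIV) (\<lambda>p::real\<times>real. v' (fst p))"
    by (rule continuous_on_compose2[OF cv(2)]) (auto intro!: continuous_intros)
  have c3: "continuous_on ({0..1} \<times> UNIV) (\<lambda>p::real\<times>real. snd p)"
    by (auto intro!: continuous_intros)
  have "closed ({p \<in> {0..1} \<times> UNIV. v (fst p) \<le> snd p} \<inter> {p \<in> {0..1} \<times> UNIV. snd p \<le> v' (fst p)})"
    by (intro closed_Int continuous_on_closed_Collect_le c1 c2 c3 S)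
  moreover have "W = {p \<in> {0..1} \<times> UNIV. v (fst p) \<le> snd p} \<inter> {p \<in> {0..1} \<times> UNIV. snd p \<le> v' (fst p)}"
    using assms unfolding hstrip_by_def hset_def by auto
  ultimately show ?thesis by simp
qed

lemma strips_meet:
  assumes "vstrip_by \<mu> v v' A" "hstrip_by \<mu>' h h' B"
  shows "A \<inter> B \<noteq> {}"
proof -
  have cv: "continuous_on {0..1} v" and ch: "continuous_on {0..1} h"
    using assms curve_cont unfolding vstrip_by_def hstrip_by_def by auto
  have vr: "\<And>y. y \<in> {0..1} \<Longrightarrow> v y \<in> {0..1}" and hr: "\<And>y. y \<in> {0..1} \<Longrightarrow> h y \<in> {0..1}"
    using assms unfolding vstrip_by_def hstrip_by_def curve_def by (auto simp: image_subset_iff)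
  have cg: "continuous_on {0..1} (\<lambda>y. h (v y) - y)"
    by (intro continuous_intros continuous_on_compose2[OF ch cv]) (use vr in auto)
  have "\<exists>y\<ge>0. y \<le> 1 \<and> h (v y) - y = 0"
  proof (rule IVT2'[of "\<lambda>y. h (v y) - y", OF _ _ _ cg])
    have "v 1 \<in> {0..1}" "v 0 \<in> {0..1}" using vr by auto
    then have "h (v 1) \<in> {0..1}" "h (v 0) \<in> {0..1}" using hr by auto
    then show "h (v 1) - 1 \<le> 0" "0 \<le> h (v 0) - 0" by auto
  qed auto
  then obtain y where y: "0 \<le> y" "y \<le> 1" "h (v y) = y" by auto
  have "(v y, y) \<in> A" using assms y unfolding vstrip_by_def vset_def by (auto simp: less_imp_le)
  moreover have "(v y, y) \<in> B"
  proof -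
    have "v y \<in> {0..1}" using vr y by auto
    then have "h (v y) < h' (v y)" using assms unfolding hstrip_by_def by auto
    then show ?thesis using assms y \<open>v y \<in> {0..1}\<close> unfolding hstrip_by_def hset_def by auto
  qed
  ultimately show ?thesis by blast
qed


lemma strip_diam:
  assumes V: "vstrip_by \<mu>v v v' A" and H: "hstrip_by \<mu>h h h' B"
    and mu: "0 \<le> \<mu>h" "\<mu>h \<le> 1" "0 \<le> \<mu>v" "\<mu>v \<le> 1" "\<mu>h * \<mu>v < 1"
    and p: "p \<in> A \<inter> B" and q: "q \<in> A \<inter> B"
  shows "dist p q \<le> 3 * (curve_gap v v' + curve_gap h h') / (1 - \<mu>h * \<mu>v)"
proof -
  obtain a b where pab: "p = (a, b)" by (cases p)
  obtain c d where qcd: "q = (c, d)" by (cases q)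
  define wV where "wV = curve_gap v v'"
  define wH where "wH = curve_gap h h'"
  have cv: "curve \<mu>v v" "curve \<mu>v v'" "\<forall>y\<in>{0..1}. v y < v' y" "A = vset v v'"
    using V unfolding vstrip_by_def by auto
  have ch: "curve \<mu>h h" "curve \<mu>h h'" "\<forall>y\<in>{0..1}. h y < h' y" "B = hset h h'"
    using H unfolding hstrip_by_def by auto
  have pa: "b \<in> {0..1}" "v b \<le> a" "a \<le> v' b" "a \<in> {0..1}" "h a \<le> b" "b \<le> h' a"
    using p pab cv(4) ch(4) by (auto simp: vset_def hset_def)
  have qa: "d \<in> {0..1}" "v d \<le> c" "c \<le> v' d" "c \<in> {0..1}" "h c \<le> d" "d \<le> h' c"
    using q qcd cv(4) ch(4) by (auto simp: vset_def hset_def)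
  have g1: "v' b - v b \<le> wV" "v' d - v d \<le> wV"
    using gap_upper[OF cv(1,2), of b] gap_upper[OF cv(1,2), of d] pa qa unfolding wV_def by auto
  have g2: "h' a - h a \<le> wH" "h' c - h c \<le> wH"
    using gap_upper[OF ch(1,2), of a] gap_upper[OF ch(1,2), of c] pa qa unfolding wH_def by auto
  have lv: "\<bar>v b - v d\<bar> \<le> \<mu>v * \<bar>b - d\<bar>"
    using lipschitz_onD[of \<mu>v "{0..1}" v b d] cv(1) pa qa unfolding curve_def by (auto simp: dist_real_def)
  have lh: "\<bar>h a - h c\<bar> \<le> \<mu>h * \<bar>a - c\<bar>"
    using lipschitz_onD[of \<mu>h "{0..1}" h a c] ch(1) pa qa unfolding curve_def by (auto simp: dist_real_def)
  define X where "X = \<bar>a - c\<bar>"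
  define Y where "Y = \<bar>b - d\<bar>"
  have X: "X \<le> \<mu>v * Y + wV" using lv g1 pa qa unfolding X_def Y_def by (auto simp: abs_le_iff)
  have Y: "Y \<le> \<mu>h * X + wH" using lh g2 pa qa unfolding X_def Y_def by (auto simp: abs_le_iff)
  have wpos: "0 \<le> wV" "0 \<le> wH" using g1 g2 pa qa cv(3) ch(3) by (auto intro: order_trans[rotated])
  have "\<mu>h * X \<le> \<mu>h * (\<mu>v * Y + wV)" using X mu by (intro mult_left_mono) auto
  then have "Y \<le> (\<mu>h * \<mu>v) * Y + \<mu>h * wV + wH" using Y by (simp add: algebra_simps)
  moreover have "\<mu>h * wV \<le> wV" using mu wpos by (simp add: mult_left_le_one_le)
  ultimately have "(1 - \<mu>h * \<mu>v) * Y \<le> wV + wH" by (simp add: algebra_simps)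
  then have Yb: "Y \<le> (wV + wH) / (1 - \<mu>h * \<mu>v)" using mu by (simp add: pos_le_divide_eq mult.commute)
  have "\<mu>v * Y \<le> Y" using mu unfolding Y_def by (simp add: mult_left_le_one_le)
  then have Xb: "X \<le> Y + wV" using X by simp
  have "wV \<le> (wV + wH) / (1 - \<mu>h * \<mu>v)"
  proof -
    have "wV * (1 - \<mu>h * \<mu>v) \<le> wV" using mu wpos by (simp add: mult_left_le_one_le mult_nonneg_nonneg algebra_simps)
    also have "\<dots> \<le> wV + wH" using wpos by simp
    finally show ?thesis using mu by (simp add: pos_le_divide_eq)
  qed
  define Q where "Q = (wV + wH) / (1 - \<mu>h * \<mu>v)"
  have "dist p q \<le> dist (a, b) (c, b) + dist (c, b) (c, d)" unfolding pab qcd by (rule dist_triangle)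
  also have "\<dots> = X + Y" unfolding X_def Y_def by (simp add: dist_Pair_Pair dist_real_def)
  also have "\<dots> \<le> 3 * Q" using Xb Yb \<open>wV \<le> _\<close> unfolding Q_def[symmetric] by linarith
  finally show ?thesis unfolding Q_def wV_def wH_def by simp
qed

lemma small_pow:
  fixes a b C e :: real
  assumes "0 < a" "a < 1" "0 < b" "b < 1" "0 < C" "0 < e"
  shows "\<exists>n. \<forall>m\<ge>n. C * (a ^ m + b ^ m) < e"
proof -
  obtain n1 where n1: "a ^ n1 < e / (2 * C)" using real_arch_pow_inv[of "e/(2*C)" a] assms by auto
  obtain n2 where n2: "b ^ n2 < e / (2 * C)" using real_arch_pow_inv[of "e/(2*C)" b] assms by auto
  show ?thesis
  proof (intro exI allI impI)
    fix m assume m: "max n1 n2 \<le> m"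
    have "a ^ m \<le> a ^ n1" using m assms by (intro power_decreasing) auto
    moreover have "b ^ m \<le> b ^ n2" using m assms by (intro power_decreasing) auto
    ultimately have "a ^ m + b ^ m < e / C" using n1 n2 by (simp add: field_simps)
    then show "C * (a ^ m + b ^ m) < e" using assms by (simp add: field_simps)
  qed
qed

section \<open>The zip metric\<close>

lemma tau_Z: "tau s \<in> Zset"
  by (cases s) (auto simp: Zset_def)

lemma zd_lt:
  "zip_dist x y < 2 powr (- real n) \<longleftrightarrow> (\<forall>i. nat \<bar>i\<bar> \<le> n \<longrightarrow> x i = y i)"
proof (cases "x = y")
  case True then show ?thesis by (simp add: zip_dist_def)
next
  case False
  then obtain i0 where i0: "x i0 \<noteq> y i0" by auto
  define m where "m = (LEAST n. \<exists>i. nat \<bar>i\<bar> = n \<and> x i \<noteq> y i)"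
  have ex: "\<exists>i. nat \<bar>i\<bar> = m \<and> x i \<noteq> y i"
    unfolding m_def by (rule LeastI[of _ "nat \<bar>i0\<bar>"]) (use i0 in auto)
  have le: "\<And>i. x i \<noteq> y i \<Longrightarrow> m \<le> nat \<bar>i\<bar>"
    unfolding m_def by (rule Least_le) auto
  have d: "zip_dist x y = 2 powr (- real m)" using False by (simp add: zip_dist_def m_def)
  show ?thesis unfolding d
  proof
    assume "2 powr (- real m) < 2 powr (- real n)"
    then have "n < m" by simp
    then show "\<forall>i. nat \<bar>i\<bar> \<le> n \<longrightarrow> x i = y i" using le by force
  next
    assume a: "\<forall>i. nat \<bar>i\<bar> \<le> n \<longrightarrow> x i = y i"
    have "n < m" using ex a by force
    then show "2 powr (- real m) < 2 powr (- real n)" by simp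
  qed
qed

lemma zd_form: "x \<noteq> y \<Longrightarrow> \<exists>m. zip_dist x y = 2 powr (- real m)"
  by (auto simp: zip_dist_def)

lemma zip_metric: "Metric_space M zip_dist"
proof
  fix x y :: "int \<Rightarrow> letter"
  show "0 \<le> zip_dist x y" by (simp add: zip_dist_def)
  have *: "\<And>n. (\<exists>i. nat \<bar>i\<bar> = n \<and> x i \<noteq> y i) = (\<exists>i. nat \<bar>i\<bar> = n \<and> y i \<noteq> x i)" by metis
  show "zip_dist x y = zip_dist y x"
  proof (cases "x = y")
    case True thus ?thesis by simp
  next
    case False
    hence "y \<noteq> x" by simp
    thus ?thesis using False unfolding zip_dist_def * by simp
  qed
  show "zip_dist x y = 0 \<longleftrightarrow> x = y" by (simp add: zip_dist_def)
next
  fix x y z :: "int \<Rightarrow> letter"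
  show "zip_dist x z \<le> zip_dist x y + zip_dist y z"
  proof (rule ccontr)
    assume c: "\<not> ?thesis"
    have nn: "0 \<le> zip_dist x y" "0 \<le> zip_dist y z" by (simp_all add: zip_dist_def)
    have "x \<noteq> z" using c nn by (auto simp: zip_dist_def)
    then obtain m where m: "zip_dist x z = 2 powr (- real m)" using zd_form by blast
    have "zip_dist x y < 2 powr (- real m)" "zip_dist y z < 2 powr (- real m)" using c nn m by auto
    then have "\<forall>i. nat \<bar>i\<bar> \<le> m \<longrightarrow> x i = z i" unfolding zd_lt by auto
    then have "zip_dist x z < 2 powr (- real m)" unfolding zd_lt .
    then show False using m by simp
  qed
qed

lemmas zopen = Metric_space.openin_mtopology[OF zip_metric]
lemmas zin_mball = Metric_space.in_mball[OF zip_metric]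

definition Aset :: "nat \<Rightarrow> int \<Rightarrow> letter set" where
  "Aset N i = (if 0 \<le> i then Sset N else Zset)"

lemma zip_space_PiE: "zip_space N = Pi\<^sub>E UNIV (Aset N)"
proof (rule set_eqI)
  fix x :: "int \<Rightarrow> letter"
  have "(\<forall>i. x i \<in> Aset N i) \<longleftrightarrow> (\<forall>i\<ge>0. x i \<in> Sset N) \<and> (\<forall>i<0. x i \<in> Zset)"
  proof
    assume a: "\<forall>i. x i \<in> Aset N i"
    show "(\<forall>i\<ge>0. x i \<in> Sset N) \<and> (\<forall>i<0. x i \<in> Zset)"
    proof (intro conjI allI impI)
      fix i :: int assume "0 \<le> i" then show "x i \<in> Sset N" using a[rule_format, of i] by (simp add: Aset_def)
    next
      fix i :: int assume "i < 0" then show "x i \<in> Zset" using a[rule_format, of i] by (simp add: Aset_def)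
    qed
  next
    assume a: "(\<forall>i\<ge>0. x i \<in> Sset N) \<and> (\<forall>i<0. x i \<in> Zset)"
    show "\<forall>i. x i \<in> Aset N i"
    proof
      fix i :: int show "x i \<in> Aset N i"
        by (cases "0 \<le> i") (use a in \<open>auto simp: Aset_def\<close>)
    qed
  qed
  then show "x \<in> zip_space N \<longleftrightarrow> x \<in> Pi\<^sub>E UNIV (Aset N)"
    by (simp add: zip_space_def PiE_UNIV_domain Pi_def)
qed

lemma pow_small: "0 < r \<Longrightarrow> \<exists>n. 2 powr (- real n) < (r::real)"
proof -
  assume r: "0 < r"
  obtain n where "(1/2::real) ^ n < r" using real_arch_pow_inv[OF r, of "1/2"] by auto
  moreover have "2 powr (- real n) = (1/2::real) ^ n"
    by (simp add: powr_minus powr_realpow power_one_over inverse_eq_divide)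
  ultimately show ?thesis by (intro exI[of _ n]) simp
qed

lemma zip_topology:
  "Metric_space.mtopology (zip_space N) zip_dist = product_topology (\<lambda>i. discrete_topology (Aset N i)) UNIV"
proof (rule topology_eq[THEN iffD2], intro allI iffI)
  fix S
  assume S: "openin (Metric_space.mtopology (zip_space N) zip_dist) S"
  show "openin (product_topology (\<lambda>i. discrete_topology (Aset N i)) UNIV) S"
    unfolding openin_product_topology_alt topspace_discrete_topology
  proof
    fix x assume x: "x \<in> S"
    obtain r where r: "r > 0" "Metric_space.mball (zip_space N) zip_dist x r \<subseteq> S" using S x unfolding zopen by blast
    have xM: "x \<in> zip_space N" using S x zopen by blast
    obtain n where n: "2 powr (- real n) < r" using pow_small[OF r(1)] by blast
    define U where "U i = (if nat \<bar>i\<bar> \<le> n then {x i} else Aset N i)" for i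
    have fin: "finite {i \<in> UNIV. U i \<noteq> Aset N i}"
    proof (rule finite_subset)
      show "{i \<in> UNIV. U i \<noteq> Aset N i} \<subseteq> {- int n..int n}" by (auto simp: U_def split: if_splits)
    qed auto
    have xA: "\<And>i. x i \<in> Aset N i" using xM by (auto simp: zip_space_def Aset_def)
    have op: "\<forall>i\<in>UNIV. openin (discrete_topology (Aset N i)) (U i)"
      using xA by (auto simp: U_def)
    have xin: "x \<in> Pi\<^sub>E UNIV U" using xA by (auto simp: U_def PiE_UNIV_domain Pi_def)
    have sub: "Pi\<^sub>E UNIV U \<subseteq> S"
    proof
      fix y assume y: "y \<in> Pi\<^sub>E UNIV U"
      have yA: "y i \<in> Aset N i" for i
      proof (cases "nat \<bar>i\<bar> \<le> n")
        case True
        then have "y i \<in> U i" using y by (auto simp: PiE_iff)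
        then have "y i = x i" using True by (simp add: U_def)
        then show ?thesis using xA[of i] by simp
      next
        case False
        then have "y i \<in> U i" using y by (auto simp: PiE_iff)
        then show ?thesis using False by (simp add: U_def)
      qed
      have yM: "y \<in> zip_space N" unfolding zip_space_PiE using yA by (simp add: PiE_UNIV_domain)
      have "\<forall>i. nat \<bar>i\<bar> \<le> n \<longrightarrow> x i = y i"
      proof (intro allI impI)
        fix i assume i: "nat \<bar>i\<bar> \<le> n"
        have "y i \<in> U i" using y by (auto simp: PiE_iff)
        then show "x i = y i" using i by (simp add: U_def)
      qed
      then have "zip_dist x y < 2 powr (- real n)" unfolding zd_lt .
      then have "zip_dist x y < r" using n by linarith
      then have "y \<in> Metric_space.mball (zip_space N) zip_dist x r" using xM yM by (simp add: zin_mball)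
      then show "y \<in> S" using r by blast
    qed
    show "\<exists>U. finite {i \<in> UNIV. U i \<noteq> Aset N i} \<and> (\<forall>i\<in>UNIV. openin (discrete_topology (Aset N i)) (U i))
         \<and> x \<in> Pi\<^sub>E UNIV U \<and> Pi\<^sub>E UNIV U \<subseteq> S"
      by (rule exI[of _ U]) (intro conjI fin op xin sub)
  qed
next
  fix S
  assume S: "openin (product_topology (\<lambda>i. discrete_topology (Aset N i)) UNIV) S"
  have SM: "S \<subseteq> zip_space N"
    using openin_subset[OF S] by (simp add: zip_space_PiE)
  show "openin (Metric_space.mtopology (zip_space N) zip_dist) S"
    unfolding zopen
  proof (intro conjI allI impI SM)
    fix x assume x: "x \<in> S"
    then obtain U where U: "finite {i \<in> UNIV. U i \<noteq> Aset N i}"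
      "\<forall>i\<in>UNIV. openin (discrete_topology (Aset N i)) (U i)" "x \<in> Pi\<^sub>E UNIV U" "Pi\<^sub>E UNIV U \<subseteq> S"
      using S unfolding openin_product_topology_alt topspace_discrete_topology by blast
    define F where "F = {i \<in> UNIV. U i \<noteq> Aset N i}"
    define n where "n = (\<Sum>i\<in>F. nat \<bar>i\<bar>)"
    have Fn: "\<And>i. i \<in> F \<Longrightarrow> nat \<bar>i\<bar> \<le> n"
      unfolding n_def using U(1) F_def by (intro member_le_sum) auto
    show "\<exists>r>0. Metric_space.mball (zip_space N) zip_dist x r \<subseteq> S"
    proof (intro exI conjI)
      show "0 < 2 powr (- real n)" by simp
      show "Metric_space.mball (zip_space N) zip_dist x (2 powr (- real n)) \<subseteq> S"
      proof
        fix y assume "y \<in> Metric_space.mball (zip_space N) zip_dist x (2 powr (- real n))"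
        then have yM: "y \<in> zip_space N" and d: "zip_dist x y < 2 powr (- real n)" by (auto simp: zin_mball)
        have agree: "\<forall>i. nat \<bar>i\<bar> \<le> n \<longrightarrow> x i = y i" using d unfolding zd_lt .
        have "y \<in> Pi\<^sub>E UNIV U"
        proof (unfold PiE_UNIV_domain, rule Pi_I)
          fix i :: int
          show "y i \<in> U i"
          proof (cases "i \<in> F")
            case True
            then have "y i = x i" using agree Fn by auto
            then show ?thesis using U(3) by (auto simp: PiE_iff)
          next
            case False
            then have "U i = Aset N i" unfolding F_def by auto
            then show ?thesis using yM by (auto simp: zip_space_PiE PiE_iff)
          qed
        qed
        then show "y \<in> S" using U(4) by blast
      qed
    qed
  qed
qed

lemma finite_Sset: "finite (Sset N)" by (simp add: Sset_def)
lemma finite_Zset: "finite Zset" by (simp add: Zset_def)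

lemma zip_compact: "compact_space (Metric_space.mtopology (zip_space N) zip_dist)"
  unfolding zip_topology compact_space_product_topology
  by (rule disjI2) (simp add: compact_space_discrete_topology Aset_def finite_Sset finite_Zset)

lemma zip_coord: "continuous_map (Metric_space.mtopology (zip_space N) zip_dist) (discrete_topology (Aset N i)) (\<lambda>x. x i)"
  unfolding zip_topology by (rule continuous_map_product_projection) simp


locale hs =
  fixes f :: "real \<times> real \<Rightarrow> real \<times> real" and N :: nat and \<mu>h \<mu>v \<alpha>V \<alpha>H :: real
    and H :: "letter \<Rightarrow> (real \<times> real) set" and hl hu :: "letter \<Rightarrow> real \<Rightarrow> real"
    and V :: "letter \<Rightarrow> (real \<times> real) set" and vl vr :: "letter \<Rightarrow> real \<Rightarrow> real"
  assumes mu: "0 < \<mu>h" "\<mu>h < 1" "0 < \<mu>v" "\<mu>v < 1"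
    and N: "N \<ge> 1"
    and Hs: "\<And>z. z \<in> Zset \<Longrightarrow> hstrip_by \<mu>h (hl z) (hu z) (H z)" "H La \<inter> H Lb = {}"
    and Vs: "\<And>s. s \<in> Sset N \<Longrightarrow> vstrip_by \<mu>v (vl s) (vr s) (V s)"
      "\<And>s t. s \<in> Sset N \<Longrightarrow> t \<in> Sset N \<Longrightarrow> s \<noteq> t \<Longrightarrow> V s \<inter> V t = {}"
      "\<And>s. s \<in> Sset N \<Longrightarrow> \<exists>g. homeomorphism (V s) (H (tau s)) f g"
    and A2: "0 < \<alpha>V" "\<alpha>V < 1" "0 < \<alpha>H" "\<alpha>H < 1"
      "\<And>W j l. j \<in> Sset N \<Longrightarrow> l \<in> Sset N \<Longrightarrow> is_vstrip \<mu>v W \<Longrightarrow> W \<subseteq> V j \<Longrightarrow>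
          is_vstrip \<mu>v (f -` W \<inter> V l) \<and> vwidth (f -` W \<inter> V l) < \<alpha>V * vwidth W"
      "\<And>W j k. j \<in> Zset \<Longrightarrow> k \<in> Zset \<Longrightarrow> is_hstrip \<mu>h W \<Longrightarrow> W \<subseteq> H j \<Longrightarrow>
          is_hstrip \<mu>h (f ` W \<inter> H k) \<and> hwidth (f ` W \<inter> H k) \<le> \<alpha>H * hwidth W"
begin

fun vw :: "letter list \<Rightarrow> (real \<times> real) set" where
  "vw [] = UNIV"
| "vw (s # u) = V s \<inter> f -` vw u"

fun hw :: "letter list \<Rightarrow> (real \<times> real) set" where
  "hw [] = UNIV"
| "hw [z] = H z"
| "hw (z # y # u) = H z \<inter> f ` hw (y # u)"

lemma hw_cons: "u \<noteq> [] \<Longrightarrow> hw (z # u) = H z \<inter> f ` hw u"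
  by (cases u) auto

lemma f_V: "s \<in> Sset N \<Longrightarrow> f ` V s = H (tau s)"
  using Vs(3) unfolding homeomorphism_def by blast

lemma inj_V: "s \<in> Sset N \<Longrightarrow> inj_on f (V s)"
proof -
  assume s: "s \<in> Sset N"
  obtain g where "homeomorphism (V s) (H (tau s)) f g" using Vs(3)[OF s] by blast
  then have "\<forall>x\<in>V s. g (f x) = x" unfolding homeomorphism_def by blast
  then show ?thesis by (metis inj_on_inverseI)
qed

lemma vw_props:
  "set u \<subseteq> Sset N \<Longrightarrow> u \<noteq> [] \<Longrightarrow>
     is_vstrip \<mu>v (vw u) \<and> vwidth (vw u) \<le> \<alpha>V ^ (length u - 1) \<and> vw u \<subseteq> V (hd u)"
proof (induction u)
  case Nil then show ?case by simp
next
  case (Cons s u)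
  have s: "s \<in> Sset N" using Cons.prems by simp
  show ?case
  proof (cases "u = []")
    case True
    then have e: "vw (s # u) = V s" by simp
    have "vstrip_by \<mu>v (vl s) (vr s) (V s)" using Vs(1)[OF s] .
    then have "is_vstrip \<mu>v (V s)" "vwidth (V s) \<le> 1"
      using vwidth_eq gap_le1 unfolding is_vstrip_def vstrip_by_def by (blast, metis)
    then show ?thesis using e True by simp
  next
    case False
    have u: "set u \<subseteq> Sset N" using Cons.prems by simp
    have IH: "is_vstrip \<mu>v (vw u)" "vwidth (vw u) \<le> \<alpha>V ^ (length u - 1)" "vw u \<subseteq> V (hd u)"
      using Cons.IH[OF u False] by auto
    have hu: "hd u \<in> Sset N" using u False by (cases u) auto
    have A: "is_vstrip \<mu>v (f -` vw u \<inter> V s) \<and> vwidth (f -` vw u \<inter> V s) < \<alpha>V * vwidth (vw u)"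
      by (rule A2(5)[OF hu s IH(1) IH(3)])
    have e: "vw (s # u) = f -` vw u \<inter> V s" by auto
    have "\<alpha>V * vwidth (vw u) \<le> \<alpha>V * \<alpha>V ^ (length u - 1)"
      using IH(2) A2(1) by (intro mult_left_mono) auto
    also have "\<dots> = \<alpha>V ^ length u" using False by (cases u) auto
    finally show ?thesis using A e by auto
  qed
qed

lemma hw_props:
  "set u \<subseteq> Zset \<Longrightarrow> u \<noteq> [] \<Longrightarrow>
     is_hstrip \<mu>h (hw u) \<and> hwidth (hw u) \<le> \<alpha>H ^ (length u - 1) \<and> hw u \<subseteq> H (hd u)"
proof (induction u rule: hw.induct)
  case 1 then show ?case by simp
next
  case (2 z)
  have z: "z \<in> Zset" using 2 by simp
  have "hstrip_by \<mu>h (hl z) (hu z) (H z)" using Hs(1)[OF z] .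
  then have "is_hstrip \<mu>h (H z)" "hwidth (H z) \<le> 1"
    using hwidth_eq gap_le1 unfolding is_hstrip_def hstrip_by_def by (blast, metis)
  then show ?case by simp
next
  case (3 z y u)
  have z: "z \<in> Zset" and y: "y \<in> Zset" and u: "set (y # u) \<subseteq> Zset" using "3.prems" by auto
  have IH: "is_hstrip \<mu>h (hw (y # u))" "hwidth (hw (y # u)) \<le> \<alpha>H ^ (length u)" "hw (y # u) \<subseteq> H y"
    using "3.IH"[OF u] by auto
  have A: "is_hstrip \<mu>h (f ` hw (y # u) \<inter> H z) \<and> hwidth (f ` hw (y # u) \<inter> H z) \<le> \<alpha>H * hwidth (hw (y # u))"
    by (rule A2(6)[OF y z IH(1) IH(3)])
  have e: "hw (z # y # u) = f ` hw (y # u) \<inter> H z" by auto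
  have "\<alpha>H * hwidth (hw (y # u)) \<le> \<alpha>H * \<alpha>H ^ (length u)"
    using IH(2) A2(3) by (intro mult_left_mono) auto
  then show ?case using A e by auto
qed

lemma vw_app: "vw (u @ w) \<subseteq> vw u"
  by (induction u) auto

lemma hw_app: "u \<noteq> [] \<Longrightarrow> hw (u @ w) \<subseteq> hw u"
proof (induction u rule: hw.induct)
  case 1 then show ?case by simp
next
  case (2 z) then show ?case by (cases w) auto
next
  case (3 z y u)
  have "hw ((y # u) @ w) \<subseteq> hw (y # u)" using "3.IH" by simp
  then show ?case by auto
qed

lemma vw_det:
  "p \<in> vw u \<Longrightarrow> p \<in> vw u' \<Longrightarrow> length u = length u' \<Longrightarrow> set u \<subseteq> Sset N \<Longrightarrow> set u' \<subseteq> Sset N \<Longrightarrow> u = u'"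
proof (induction u arbitrary: u' p)
  case Nil then show ?case by simp
next
  case (Cons s u)
  then obtain t w where u': "u' = t # w" by (cases u') auto
  have "p \<in> V s" "p \<in> V t" using Cons.prems u' by auto
  then have "s = t" using Vs(2)[of s t] Cons.prems u' by auto
  moreover have "u = w"
    using Cons.IH[of "f p" w] Cons.prems u' by auto
  ultimately show ?case using u' by simp
qed

definition vword :: "(int \<Rightarrow> letter) \<Rightarrow> nat \<Rightarrow> letter list" where
  "vword x n = map (\<lambda>i. x (int i)) [0..<Suc n]"

definition hword :: "(int \<Rightarrow> letter) \<Rightarrow> nat \<Rightarrow> letter list" where
  "hword x n = map (\<lambda>i. x (- int i - 1)) [0..<Suc n]"

definition K :: "(int \<Rightarrow> letter) \<Rightarrow> nat \<Rightarrow> (real \<times> real) set" where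
  "K x n = vw (vword x n) \<inter> hw (hword x n)"

lemma vword_Suc: "vword x (Suc n) = vword x n @ [x (int (Suc n))]"
  unfolding vword_def by simp

lemma hword_Suc: "hword x (Suc n) = hword x n @ [x (- int (Suc n) - 1)]"
  unfolding hword_def by simp

lemma vword_ne: "vword x n \<noteq> []" and hword_ne: "hword x n \<noteq> []"
  unfolding vword_def hword_def by auto

lemma vword_len: "length (vword x n) = Suc n" and hword_len: "length (hword x n) = Suc n"
  unfolding vword_def hword_def by auto

lemma vword_hd: "hd (vword x n) = x 0" and hword_hd: "hd (hword x n) = x (-1)"
  unfolding vword_def hword_def by (simp_all add: upt_conv_Cons del: upt_Suc)

lemma vword_0: "vword x 0 = [x 0]" and hword_0: "hword x 0 = [x (-1)]"
  unfolding vword_def hword_def by simp_all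

lemma vword_set: "x \<in> zip_space N \<Longrightarrow> set (vword x n) \<subseteq> Sset N"
  unfolding vword_def zip_space_def by auto

lemma hword_set: "x \<in> zip_space N \<Longrightarrow> set (hword x n) \<subseteq> Zset"
  unfolding hword_def zip_space_def by auto

lemma vword_nth: "i \<le> n \<Longrightarrow> vword x n ! i = x (int i)"
  unfolding vword_def by (simp del: upt_Suc add: nth_map)

lemma vword_cong: "(\<And>i. i \<le> n \<Longrightarrow> x (int i) = y (int i)) \<Longrightarrow> vword x n = vword y n"
  unfolding vword_def by (intro map_cong) auto

lemma hword_cong: "(\<And>i. i \<le> n \<Longrightarrow> x (- int i - 1) = y (- int i - 1)) \<Longrightarrow> hword x n = hword y n"
  unfolding hword_def by (intro map_cong) auto

lemma vword_zs: "vword x (Suc n) = x 0 # vword (zip_shift x) n"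
  unfolding vword_def zip_shift_def
  by (subst map_upt_Suc) (simp add: add.commute)

lemma hword_zs: "hword (zip_shift x) (Suc n) = tau (x 0) # hword x n"
proof -
  have e: "\<And>a::int. -1 - a = - a - 1" by simp
  show ?thesis unfolding hword_def zip_shift_def
    by (subst map_upt_Suc) (simp add: e)
qed

lemma K_closed: "x \<in> zip_space N \<Longrightarrow> closed (K x n)"
proof -
  assume x: "x \<in> zip_space N"
  have "is_vstrip \<mu>v (vw (vword x n))" using vw_props[OF vword_set[OF x] vword_ne] by blast
  then have c1: "closed (vw (vword x n))" using vstrip_closed unfolding is_vstrip_def by blast
  have "is_hstrip \<mu>h (hw (hword x n))" using hw_props[OF hword_set[OF x] hword_ne] by blast
  then have c2: "closed (hw (hword x n))" using hstrip_closed unfolding is_hstrip_def by blast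
  show ?thesis unfolding K_def using c1 c2 by (rule closed_Int)
qed

lemma K_ne: "x \<in> zip_space N \<Longrightarrow> K x n \<noteq> {}"
proof -
  assume x: "x \<in> zip_space N"
  have "is_vstrip \<mu>v (vw (vword x n))" using vw_props[OF vword_set[OF x] vword_ne] by blast
  then obtain v v' where v: "vstrip_by \<mu>v v v' (vw (vword x n))" unfolding is_vstrip_def by blast
  have "is_hstrip \<mu>h (hw (hword x n))" using hw_props[OF hword_set[OF x] hword_ne] by blast
  then obtain h h' where h: "hstrip_by \<mu>h h h' (hw (hword x n))" unfolding is_hstrip_def by blast
  show ?thesis unfolding K_def by (rule strips_meet[OF v h])
qed

lemma K_Suc: "K x (Suc n) \<subseteq> K x n"
  unfolding K_def vword_Suc hword_Suc using vw_app hw_app[OF hword_ne] by blast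

lemma K_mono: "m \<le> n \<Longrightarrow> K x n \<subseteq> K x m"
  by (rule lift_Suc_antimono_le[of "K x"]) (use K_Suc in auto)

definition Cst :: real where "Cst = 3 / (1 - \<mu>h * \<mu>v)"

lemma mu_prod: "\<mu>h * \<mu>v < 1"
proof -
  have "\<mu>h * \<mu>v \<le> \<mu>h * 1" using mu by (intro mult_left_mono) auto
  then show ?thesis using mu by linarith
qed

lemma Cst_pos: "0 < Cst"
  unfolding Cst_def using mu_prod by simp

lemma K_diam:
  assumes x: "x \<in> zip_space N" and p: "p \<in> K x n" and q: "q \<in> K x n"
  shows "dist p q \<le> Cst * (\<alpha>V ^ n + \<alpha>H ^ n)"
proof -
  have V1: "is_vstrip \<mu>v (vw (vword x n))" and V2: "vwidth (vw (vword x n)) \<le> \<alpha>V ^ n"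
    using vw_props[OF vword_set[OF x] vword_ne] by (auto simp: vword_len)
  obtain v v' where v: "vstrip_by \<mu>v v v' (vw (vword x n))" using V1 unfolding is_vstrip_def by blast
  have H1: "is_hstrip \<mu>h (hw (hword x n))" and H2: "hwidth (hw (hword x n)) \<le> \<alpha>H ^ n"
    using hw_props[OF hword_set[OF x] hword_ne] by (auto simp: hword_len)
  obtain h h' where h: "hstrip_by \<mu>h h h' (hw (hword x n))" using H1 unfolding is_hstrip_def by blast
  have gv: "curve_gap v v' \<le> \<alpha>V ^ n" using V2 vwidth_eq[OF v] by simp
  have gh: "curve_gap h h' \<le> \<alpha>H ^ n" using H2 hwidth_eq[OF h] by simp
  have "dist p q \<le> 3 * (curve_gap v v' + curve_gap h h') / (1 - \<mu>h * \<mu>v)"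
    by (rule strip_diam[OF v h]) (use mu mu_prod p q in \<open>auto simp: K_def\<close>)
  also have "\<dots> = Cst * (curve_gap v v' + curve_gap h h')" unfolding Cst_def by simp
  also have "\<dots> \<le> Cst * (\<alpha>V ^ n + \<alpha>H ^ n)"
    using gv gh Cst_pos by (intro mult_left_mono) auto
  finally show ?thesis .
qed

lemma K_small: "e > 0 \<Longrightarrow> \<exists>n. \<forall>m\<ge>n. Cst * (\<alpha>V ^ m + \<alpha>H ^ m) < e"
  using small_pow[of \<alpha>V \<alpha>H Cst e] A2(1-4) Cst_pos by auto

lemma K_sing: "x \<in> zip_space N \<Longrightarrow> \<exists>a. \<Inter> (range (K x)) = {a}"
proof (rule decreasing_closed_nest_sing)
  fix e :: real assume e: "e > 0"
  assume x: "x \<in> zip_space N"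
  obtain n where n: "\<forall>m\<ge>n. Cst * (\<alpha>V ^ m + \<alpha>H ^ m) < e" using K_small[OF e] by blast
  show "\<exists>n. \<forall>p\<in>K x n. \<forall>q\<in>K x n. dist p q < e"
  proof (intro exI ballI)
    fix p q assume "p \<in> K x n" "q \<in> K x n"
    then have "dist p q \<le> Cst * (\<alpha>V ^ n + \<alpha>H ^ n)" by (rule K_diam[OF x])
    then show "dist p q < e" using n by force
  qed
next
  show "\<And>n. x \<in> zip_space N \<Longrightarrow> closed (K x n)" by (rule K_closed)
  show "\<And>n. x \<in> zip_space N \<Longrightarrow> K x n \<noteq> {}" by (rule K_ne)
  show "\<And>m n. x \<in> zip_space N \<Longrightarrow> m \<le> n \<Longrightarrow> K x n \<subseteq> K x m" by (rule K_mono)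
qed

definition Pt :: "(int \<Rightarrow> letter) \<Rightarrow> real \<times> real" where
  "Pt x = (THE p. \<forall>n. p \<in> K x n)"

lemma Pt_iff: "x \<in> zip_space N \<Longrightarrow> (\<forall>n. q \<in> K x n) \<longleftrightarrow> q = Pt x"
proof -
  assume x: "x \<in> zip_space N"
  obtain a where a: "\<Inter> (range (K x)) = {a}" using K_sing[OF x] by blast
  have iff: "(\<forall>n. q \<in> K x n) \<longleftrightarrow> q = a" for q
  proof -
    have "(\<forall>n. q \<in> K x n) \<longleftrightarrow> q \<in> \<Inter> (range (K x))" by auto
    then show ?thesis using a by simp
  qed
  have "Pt x = a" unfolding Pt_def by (rule the_equality) (use iff in auto)
  then show ?thesis using iff by simp
qed

lemma Pt_K: "x \<in> zip_space N \<Longrightarrow> Pt x \<in> K x n"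
  using Pt_iff by blast

lemma Pt_V: "x \<in> zip_space N \<Longrightarrow> Pt x \<in> V (x 0)"
  using Pt_K[of x 0] by (simp add: K_def vword_0)

lemma Pt_H: "x \<in> zip_space N \<Longrightarrow> Pt x \<in> H (x (-1))"
  using Pt_K[of x 0] by (simp add: K_def hword_0)

lemma zs_M: "x \<in> zip_space N \<Longrightarrow> zip_shift x \<in> zip_space N"
proof -
  assume x: "x \<in> zip_space N"
  show ?thesis unfolding zip_space_def
  proof (intro CollectI conjI allI impI)
    fix i :: int assume "0 \<le> i"
    then show "zip_shift x i \<in> Sset N" using x by (simp add: zip_shift_def zip_space_def)
  next
    fix i :: int assume i: "i < 0"
    show "zip_shift x i \<in> Zset"
    proof (cases "i = -1")
      case True then show ?thesis by (simp add: zip_shift_def tau_Z)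
    next
      case False then have "i + 1 < 0" using i by simp
      then show ?thesis using x False by (simp add: zip_shift_def zip_space_def)
    qed
  qed
qed

lemma Pt_conj: "x \<in> zip_space N \<Longrightarrow> f (Pt x) = Pt (zip_shift x)"
proof -
  assume x: "x \<in> zip_space N"
  have x0: "x 0 \<in> Sset N" using x by (simp add: zip_space_def)
  have "\<forall>n. f (Pt x) \<in> K (zip_shift x) n"
  proof
    fix n
    have "Pt x \<in> vw (vword x (Suc n))" using Pt_K[OF x, of "Suc n"] by (simp add: K_def)
    then have a: "f (Pt x) \<in> vw (vword (zip_shift x) n)" by (simp add: vword_zs)
    have "f (Pt x) \<in> H (tau (x 0))" using Pt_V[OF x] f_V[OF x0] by blast
    moreover have "f (Pt x) \<in> f ` hw (hword x n)" using Pt_K[OF x, of n] by (simp add: K_def)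
    ultimately have "f (Pt x) \<in> hw (hword (zip_shift x) (Suc n))"
      by (simp add: hword_zs hw_cons[OF hword_ne])
    then have b: "f (Pt x) \<in> hw (hword (zip_shift x) n)"
      using hw_app[OF hword_ne] by (auto simp: hword_Suc)
    show "f (Pt x) \<in> K (zip_shift x) n" using a b by (simp add: K_def)
  qed
  then show ?thesis using Pt_iff[OF zs_M[OF x]] by blast
qed

definition pre :: "letter \<Rightarrow> (int \<Rightarrow> letter) \<Rightarrow> int \<Rightarrow> letter" where
  "pre s x = (\<lambda>j. if j = 0 then s else x (j - 1))"

definition sel :: "letter \<Rightarrow> letter" where
  "sel z = (if z = La then SU 1 else SP 1)"

lemma sel_S: "sel z \<in> Sset N"
  using N unfolding sel_def Sset_def by auto

lemma sel_tau: "z \<in> Zset \<Longrightarrow> tau (sel z) = z"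
  unfolding sel_def Zset_def by auto

lemma pre_M: "s \<in> Sset N \<Longrightarrow> x \<in> zip_space N \<Longrightarrow> pre s x \<in> zip_space N"
  unfolding zip_space_def pre_def by auto

lemma zs_pre: "tau s = x (-1) \<Longrightarrow> zip_shift (pre s x) = x"
  unfolding zip_shift_def pre_def by (rule ext) auto

lemma zs_surj: "zip_shift ` zip_space N = zip_space N"
proof
  show "zip_shift ` zip_space N \<subseteq> zip_space N" using zs_M by blast
next
  show "zip_space N \<subseteq> zip_shift ` zip_space N"
  proof
    fix x assume x: "x \<in> zip_space N"
    have z: "x (-1) \<in> Zset" using x by (simp add: zip_space_def)
    have "zip_shift (pre (sel (x (-1))) x) = x" by (rule zs_pre) (simp add: sel_tau[OF z])
    moreover have "pre (sel (x (-1))) x \<in> zip_space N" by (rule pre_M[OF sel_S x])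
    ultimately show "x \<in> zip_shift ` zip_space N" by (metis image_eqI)
  qed
qed

lemma neg_first:
  assumes x: "x \<in> zip_space N" and y: "y \<in> zip_space N" and e: "Pt x = Pt y"
  shows "x (-1) = y (-1)"
proof (rule ccontr)
  assume ne: "x (-1) \<noteq> y (-1)"
  have "x (-1) \<in> Zset" "y (-1) \<in> Zset" using x y by (auto simp: zip_space_def)
  then have d: "x (-1) = La \<or> x (-1) = Lb" "y (-1) = La \<or> y (-1) = Lb" by (simp_all add: Zset_def)
  have c: "x (-1) = La \<and> y (-1) = Lb \<or> x (-1) = Lb \<and> y (-1) = La"
    using d ne by (elim disjE) simp_all
  have hx: "Pt x \<in> H (x (-1))" using Pt_H[OF x] .
  have hy: "Pt x \<in> H (y (-1))" using Pt_H[OF y] e by simp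
  have "Pt x \<in> H La \<inter> H Lb"
    using c
  proof
    assume "x (-1) = La \<and> y (-1) = Lb" then show ?thesis using hx hy by simp
  next
    assume "x (-1) = Lb \<and> y (-1) = La" then show ?thesis using hx hy by simp
  qed
  then show False using Hs(2) by blast
qed

lemma neg_eq:
  "x \<in> zip_space N \<Longrightarrow> y \<in> zip_space N \<Longrightarrow> Pt x = Pt y \<Longrightarrow> x (- int k - 1) = y (- int k - 1)"
proof (induction k arbitrary: x y)
  case 0 then show ?case using neg_first by simp
next
  case (Suc k)
  have z: "x (-1) \<in> Zset" using Suc.prems by (simp add: zip_space_def)
  have xy: "x (-1) = y (-1)" using neg_first Suc.prems by blast
  define s where "s = sel (x (-1))"
  have s: "s \<in> Sset N" unfolding s_def by (rule sel_S)
  have ts: "tau s = x (-1)" "tau s = y (-1)" unfolding s_def using sel_tau[OF z] xy by auto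
  have M: "pre s x \<in> zip_space N" "pre s y \<in> zip_space N" using pre_M s Suc.prems by auto
  have "f (Pt (pre s x)) = Pt x" using Pt_conj[OF M(1)] zs_pre[of s x, OF ts(1)] by simp
  moreover have "f (Pt (pre s y)) = Pt y" using Pt_conj[OF M(2)] zs_pre[of s y, OF ts(2)] by simp
  moreover have "Pt (pre s x) \<in> V s" "Pt (pre s y) \<in> V s"
    using Pt_V[OF M(1)] Pt_V[OF M(2)] by (auto simp: pre_def)
  ultimately have "Pt (pre s x) = Pt (pre s y)"
    using inj_V[OF s] Suc.prems(3) unfolding inj_on_def by metis
  then have "pre s x (- int k - 1) = pre s y (- int k - 1)" using Suc.IH[OF M] by blast
  then show ?case by (simp add: pre_def algebra_simps)
qed

lemma Pt_inj: "inj_on Pt (zip_space N)"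
proof (rule inj_onI)
  fix x y assume x: "x \<in> zip_space N" and y: "y \<in> zip_space N" and e: "Pt x = Pt y"
  show "x = y"
  proof
    fix i :: int
    show "x i = y i"
    proof (cases "0 \<le> i")
      case True
      define n where "n = nat i"
      have "Pt x \<in> vw (vword x n)" "Pt x \<in> vw (vword y n)" using Pt_K[OF x, of n] Pt_K[OF y, of n] e
        by (auto simp: K_def)
      then have "vword x n = vword y n"
        using vw_det vword_set[OF x] vword_set[OF y] by (simp add: vword_len)
      then have "vword x n ! n = vword y n ! n" by simp
      then show ?thesis using True by (simp add: vword_nth n_def)
    next
      case False
      define k where "k = nat (- i - 1)"
      have "i = - int k - 1" using False unfolding k_def by simp
      then show ?thesis using neg_eq[OF x y e, of k] by simp
    qed
  qed
qed


lemma K_agree: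
  assumes "\<And>i. nat \<bar>i\<bar> \<le> Suc n \<Longrightarrow> x i = y i"
  shows "K x n = K y n"
proof -
  have "vword x n = vword y n"
    by (rule vword_cong) (rule assms, simp)
  moreover have "hword x n = hword y n"
    by (rule hword_cong) (rule assms, simp)
  ultimately show ?thesis by (simp add: K_def)
qed

lemma topT: "topspace (Metric_space.mtopology (zip_space N) zip_dist) = zip_space N"
  by (rule Metric_space.topspace_mtopology[OF zip_metric])

lemma Pt_cont: "continuous_map (Metric_space.mtopology (zip_space N) zip_dist) euclidean Pt"
  unfolding continuous_map topT
proof (intro conjI allI impI)
  show "Pt ` zip_space N \<subseteq> topspace euclidean" by simp
  fix U :: "(real \<times> real) set" assume "openin euclidean U"
  then have U: "open U" by simp
  show "openin (Metric_space.mtopology (zip_space N) zip_dist) {x \<in> zip_space N. Pt x \<in> U}"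
    unfolding zopen
  proof (intro conjI allI impI)
    show "{x \<in> zip_space N. Pt x \<in> U} \<subseteq> zip_space N" by blast
    fix x assume "x \<in> {x \<in> zip_space N. Pt x \<in> U}"
    then have x: "x \<in> zip_space N" and xU: "Pt x \<in> U" by auto
    obtain e where e: "e > 0" "ball (Pt x) e \<subseteq> U" using U xU open_contains_ball by blast
    obtain n where n: "\<forall>m\<ge>n. Cst * (\<alpha>V ^ m + \<alpha>H ^ m) < e" using K_small[OF e(1)] by blast
    show "\<exists>r>0. Metric_space.mball (zip_space N) zip_dist x r \<subseteq> {x \<in> zip_space N. Pt x \<in> U}"
    proof (intro exI conjI)
      show "0 < 2 powr (- real (Suc n))" by simp
      show "Metric_space.mball (zip_space N) zip_dist x (2 powr (- real (Suc n))) \<subseteq> {x \<in> zip_space N. Pt x \<in> U}"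
      proof
        fix y assume "y \<in> Metric_space.mball (zip_space N) zip_dist x (2 powr (- real (Suc n)))"
        then have y: "y \<in> zip_space N" and d: "zip_dist x y < 2 powr (- real (Suc n))"
          by (auto simp: zin_mball)
        have "\<forall>i. nat \<bar>i\<bar> \<le> Suc n \<longrightarrow> x i = y i" using d unfolding zd_lt .
        then have "K y n = K x n" using K_agree[of n y x] by metis
        then have "Pt y \<in> K x n" using Pt_K[OF y, of n] by simp
        then have "dist (Pt x) (Pt y) \<le> Cst * (\<alpha>V ^ n + \<alpha>H ^ n)" using K_diam[OF x Pt_K[OF x]] by blast
        then have "dist (Pt x) (Pt y) < e" using n by force
        then have "Pt y \<in> U" using e(2) by (auto simp: dist_commute)
        then show "y \<in> {x \<in> zip_space N. Pt x \<in> U}" using y by blast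
      qed
    qed
  qed
qed

lemma Pt_homeo: "homeomorphic_map (Metric_space.mtopology (zip_space N) zip_dist) (top_of_set (Pt ` zip_space N)) Pt"
proof (rule continuous_imp_homeomorphic_map)
  show "continuous_map (Metric_space.mtopology (zip_space N) zip_dist) (top_of_set (Pt ` zip_space N)) Pt"
    by (rule continuous_map_into_subtopology[OF Pt_cont]) (auto simp: topT)
  show "compact_space (Metric_space.mtopology (zip_space N) zip_dist)" by (rule zip_compact)
  show "Hausdorff_space (top_of_set (Pt ` zip_space N))"
    by (rule Hausdorff_space_subtopology) simp
  show "Pt ` topspace (Metric_space.mtopology (zip_space N) zip_dist) = topspace (top_of_set (Pt ` zip_space N))"
    by (simp add: topT)
  show "inj_on Pt (topspace (Metric_space.mtopology (zip_space N) zip_dist))"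
    using Pt_inj by (simp add: topT)
qed

lemma main:
  "\<exists>\<Lambda> \<phi>. cantor_set \<Lambda> \<and> f ` \<Lambda> = \<Lambda>
          \<and> \<Lambda> \<subseteq> (\<Union>s\<in>Sset N. V s) \<inter> (H La \<union> H Lb)
          \<and> homeomorphic_map (top_of_set \<Lambda>)
               (Metric_space.mtopology (zip_space N) zip_dist) \<phi>
          \<and> (\<forall>p\<in>\<Lambda>. \<phi> (f p) = zip_shift (\<phi> p))"
proof -
  define L where "L = Pt ` zip_space N"
  obtain g where hm: "homeomorphic_maps (Metric_space.mtopology (zip_space N) zip_dist) (top_of_set L) Pt g"
    using Pt_homeo homeomorphic_map_maps unfolding L_def by blast
  then have g1: "homeomorphic_map (top_of_set L) (Metric_space.mtopology (zip_space N) zip_dist) g"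
    and g2: "\<And>x. x \<in> zip_space N \<Longrightarrow> g (Pt x) = x"
    and g3: "\<And>p. p \<in> L \<Longrightarrow> Pt (g p) = p"
    unfolding homeomorphic_maps_map by (auto simp: topT)
  have cpt: "compact L"
  proof -
    have "compactin (Metric_space.mtopology (zip_space N) zip_dist) (zip_space N)"
      using zip_compact[of N] unfolding compact_space_def topT .
    then have "compactin euclidean (Pt ` zip_space N)" by (rule image_compactin[OF _ Pt_cont])
    then show ?thesis unfolding L_def by simp
  qed
  have ne: "L \<noteq> {}"
  proof -
    have "(\<lambda>i::int. if 0 \<le> i then SU 1 else La) \<in> zip_space N"
      using N by (auto simp: zip_space_def Sset_def Zset_def)
    then show ?thesis unfolding L_def by blast
  qed
  have perf: "\<forall>p\<in>L. p islimpt L"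
  proof
    fix p assume "p \<in> L"
    then obtain x where x: "x \<in> zip_space N" and p: "p = Pt x" unfolding L_def by blast
    show "p islimpt L"
      unfolding islimpt_approachable
    proof (intro allI impI)
      fix e :: real assume e: "e > 0"
      obtain n where n: "\<forall>m\<ge>n. Cst * (\<alpha>V ^ m + \<alpha>H ^ m) < e" using K_small[OF e] by blast
      define j where "j = int (Suc (Suc n))"
      define c where "c = (if x j = SU 1 then SP 1 else SU 1)"
      define y where "y = x(j := c)"
      have cS: "c \<in> Sset N" using N unfolding c_def Sset_def by auto
      have y: "y \<in> zip_space N" using x cS unfolding y_def j_def zip_space_def by auto
      have yx: "y \<noteq> x"
      proof
        assume "y = x"
        then have "c = x j" unfolding y_def by (metis fun_upd_same)
        then show False unfolding c_def by (auto split: if_splits)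
      qed
      have agree: "\<And>i. nat \<bar>i\<bar> \<le> Suc n \<Longrightarrow> y i = x i" unfolding y_def j_def by auto
      have "K y n = K x n" by (rule K_agree) (rule agree)
      then have "Pt y \<in> K x n" using Pt_K[OF y, of n] by simp
      then have "dist (Pt y) (Pt x) \<le> Cst * (\<alpha>V ^ n + \<alpha>H ^ n)" using K_diam[OF x _ Pt_K[OF x]] by blast
      then have d: "dist (Pt y) p < e" using n p by force
      have "Pt y \<noteq> p" using Pt_inj x y yx p unfolding inj_on_def by blast
      moreover have "Pt y \<in> L" using y unfolding L_def by blast
      ultimately show "\<exists>x'\<in>L. x' \<noteq> p \<and> dist x' p < e" using d by blast
    qed
  qed
  have tdisc: "\<forall>C. C \<subseteq> L \<and> connected C \<longrightarrow> (\<forall>p\<in>C. \<forall>q\<in>C. p = q)"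
  proof (intro allI impI ballI)
    fix C p q assume C: "C \<subseteq> L \<and> connected C" and pq: "p \<in> C" "q \<in> C"
    have "connectedin (top_of_set L) C" using C by (simp add: connectedin_subtopology)
    then have gC: "connectedin (Metric_space.mtopology (zip_space N) zip_dist) (g ` C)"
      by (rule connectedin_continuous_map_image[OF homeomorphic_imp_continuous_map[OF g1]])
    have "g p = g q"
    proof
      fix i
      have "connectedin (discrete_topology (Aset N i)) ((\<lambda>x. x i) ` g ` C)"
        by (rule connectedin_continuous_map_image[OF zip_coord gC])
      then obtain a where "(\<lambda>x. x i) ` g ` C \<subseteq> {a}" unfolding connectedin_discrete_topology by blast
      then show "g p i = g q i" using pq by blast
    qed
    then show "p = q" using g3 C pq by (metis subsetD)
  qed
  have inv: "f ` L = L"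
  proof -
    have "f ` L = (\<lambda>x. f (Pt x)) ` zip_space N" unfolding L_def by (simp add: image_image)
    also have "\<dots> = (\<lambda>x. Pt (zip_shift x)) ` zip_space N" using Pt_conj by (intro image_cong) auto
    also have "\<dots> = Pt ` (zip_shift ` zip_space N)" by (simp add: image_image)
    also have "\<dots> = L" unfolding L_def zs_surj ..
    finally show ?thesis .
  qed
  have sub: "L \<subseteq> (\<Union>s\<in>Sset N. V s) \<inter> (H La \<union> H Lb)"
  proof
    fix p assume "p \<in> L"
    then obtain x where x: "x \<in> zip_space N" and p: "p = Pt x" unfolding L_def by blast
    have "x 0 \<in> Sset N" "x (-1) \<in> Zset" using x by (auto simp: zip_space_def)
    moreover have "p \<in> V (x 0)" "p \<in> H (x (-1))" using Pt_V[OF x] Pt_H[OF x] p by auto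
    ultimately show "p \<in> (\<Union>s\<in>Sset N. V s) \<inter> (H La \<union> H Lb)" unfolding Zset_def by auto
  qed
  have conj: "\<forall>p\<in>L. g (f p) = zip_shift (g p)"
  proof
    fix p assume "p \<in> L"
    then obtain x where x: "x \<in> zip_space N" and p: "p = Pt x" unfolding L_def by blast
    have "g (f p) = g (Pt (zip_shift x))" using Pt_conj[OF x] p by simp
    also have "\<dots> = zip_shift x" by (rule g2[OF zs_M[OF x]])
    also have "\<dots> = zip_shift (g p)" using g2[OF x] p by simp
    finally show "g (f p) = zip_shift (g p)" .
  qed
  have "cantor_set L" unfolding cantor_set_def using ne cpt perf tdisc by blast
  then show ?thesis using inv sub g1 conj by blast
qed
end


theorem theorem3:
  fixes f :: "real \<times> real \<Rightarrow> real \<times> real"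
    and D :: "(real \<times> real) set" and c :: "real \<times> real" and r :: real
    and N :: nat and \<mu>h \<mu>v \<alpha>V \<alpha>H :: real
    and Qs :: "nat \<Rightarrow> (real \<times> real) set"
    and H :: "letter \<Rightarrow> (real \<times> real) set" and hl hu :: "letter \<Rightarrow> real \<Rightarrow> real"
    and V :: "letter \<Rightarrow> (real \<times> real) set" and vl vr :: "letter \<Rightarrow> real \<Rightarrow> real"
  assumes disk: "r > 0" "D = cball c r" "unit_sq \<subseteq> D"
    and params: "0 < \<mu>h" "\<mu>h < 1" "0 < \<mu>v" "\<mu>v < 1"
    and fD: "f ` D \<subseteq> D"
    and N: "N \<ge> 1"
    and Qs: "\<And>i. i \<in> {1..N} \<Longrightarrow> Qs i \<subseteq> D \<and> connected (Qs i)"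
      "\<And>i j. i \<in> {1..N} \<Longrightarrow> j \<in> {1..N} \<Longrightarrow> i \<noteq> j \<Longrightarrow> Qs i \<inter> Qs j = {}"
      "\<And>i. i \<in> {1..N} \<Longrightarrow> \<exists>g. homeomorphism (Qs i) (f ` Qs i) f g"
    and A1_H: "\<And>z. z \<in> Zset \<Longrightarrow> hstrip_by \<mu>h (hl z) (hu z) (H z)"
      "H La \<inter> H Lb = {}"
    and A1_V: "\<And>s. s \<in> Sset N \<Longrightarrow> vstrip_by \<mu>v (vl s) (vr s) (V s)"
      "\<And>s t. s \<in> Sset N \<Longrightarrow> t \<in> Sset N \<Longrightarrow> s \<noteq> t \<Longrightarrow> V s \<inter> V t = {}"
      "\<And>i. i \<in> {1..N} \<Longrightarrow> V (SU i) \<subseteq> Qs i \<and> V (SP i) \<subseteq> Qs i"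
      "\<And>s. s \<in> Sset N \<Longrightarrow> \<exists>g. homeomorphism (V s) (H (tau s)) f g"
      "\<And>s. s \<in> Sset N \<Longrightarrow>
          f ` vstrip_hbd (vl s) (vr s) \<subseteq> hstrip_hbd (hl (tau s)) (hu (tau s))"
      "\<And>s. s \<in> Sset N \<Longrightarrow>
          f ` vstrip_vbd (vl s) (vr s) \<subseteq> hstrip_vbd (hl (tau s)) (hu (tau s))"
    and A2: "0 < \<alpha>V" "\<alpha>V < 1" "0 < \<alpha>H" "\<alpha>H < 1"
      "\<And>W j l. j \<in> Sset N \<Longrightarrow> l \<in> Sset N \<Longrightarrow> is_vstrip \<mu>v W \<Longrightarrow> W \<subseteq> V j \<Longrightarrow>
          is_vstrip \<mu>v (f -` W \<inter> V l) \<and> vwidth (f -` W \<inter> V l) < \<alpha>V * vwidth W"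
      "\<And>W j k. j \<in> Zset \<Longrightarrow> k \<in> Zset \<Longrightarrow> is_hstrip \<mu>h W \<Longrightarrow> W \<subseteq> H j \<Longrightarrow>
          is_hstrip \<mu>h (f ` W \<inter> H k) \<and> hwidth (f ` W \<inter> H k) \<le> \<alpha>H * hwidth W"
  shows "\<exists>\<Lambda> \<phi>. cantor_set \<Lambda> \<and> f ` \<Lambda> = \<Lambda>
          \<and> \<Lambda> \<subseteq> (\<Union>s\<in>Sset N. V s) \<inter> (H La \<union> H Lb)
          \<and> homeomorphic_map (top_of_set \<Lambda>)
               (Metric_space.mtopology (zip_space N) zip_dist) \<phi>
          \<and> (\<forall>p\<in>\<Lambda>. \<phi> (f p) = zip_shift (\<phi> p))"
  proof -
  interpret hs f N \<mu>h \<mu>v \<alpha>V \<alpha>H H hl hu V vl vr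
  proof unfold_locales
  qed (fact params N A1_H A1_V A2)+
  show ?thesis by (rule main)
qed

end
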